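(* Consider Algorithm SS-SQP (described in the context) under the standing assumptions (A1), (A2). Let $\kappa_y>0$ be a constant with $\|y_k\|\le\kappa_y$ for all $k$, and let $\kappa_l>0$ be a constant with $\Delta l(x_k,\bar\tau_k,\bar g_k,\bar d_k)\ge\kappa_l\bar\tau_k(\|\bar d_k\|^2+\|c_k\|)$ for all $k$ (such constants exist). Then for all $k\in\mathbb{N}$: (1) if $\|\bar g_k-\nabla f_k\|\le\kappa_{\mathrm{FO}}\alpha_k\sqrt{\Delta l(x_k,\bar\tau_k,\bar g_k,\bar d_k)}$, then $$\bar\tau_k|\bar g_k^T\bar d_k|\le\left(\frac{\max\{\kappa_H,\kappa_y\}}{\kappa_l}+\frac{\sqrt{\bar\tau_k}(1+\kappa_H\zeta^{-1})\kappa_{\mathrm{FO}}\alpha_k}{\sqrt{\kappa_l}}\right)\Delta l(x_k,\bar\tau_k,\bar g_k,\bar d_k);$$ (2) if $\|\bar g_k-\nabla f_k\|\le\epsilon_g$, then $$\bar\tau_k|\bar g_k^T\bar d_k|\le\frac{\max\{\kappa_H,\kappa_y\}+1}{\kappa_l}\Delta l(x_k,\bar\tau_k,\bar g_k,\bar d_k)+\frac{\bar\tau_k(1+\kappa_H\zeta^{-1})^2}{4}\epsilon_g^2.$$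
   Context: Problem: $\min_{x\in\mathbb{R}^n}f(x)$ s.t. $c(x)=0$ with $f,c$ continuously differentiable, $c:\mathbb{R}^n\to\mathbb{R}^m$, $m\le n$; $\nabla f_k=\nabla f(x_k)$, $c_k=c(x_k)$, $J_k=\nabla c(x_k)^T$; $\|\cdot\|$ Euclidean norm. $\Delta l(x,\tau,g,d)=-\tau g^Td+\|c(x)\|_1$. $\kappa_{\mathrm{FO}}\ge0$ and $\epsilon_g\ge0$ are constants (parameters of the first-order oracle). Standing assumption (A1): there is an open convex set $\mathcal{X}$ containing all iterates and trial iterates; $f$ bounded below, $\nabla f$ $L$-Lipschitz and bounded, $c$ bounded, each $\nabla c_i$ Lipschitz and bounded on $\mathcal{X}$; singular values of $\nabla c(x)^T$ bounded away from zero on $\mathcal{X}$. (A2): $H_k$ symmetric, chosen independently of $\bar g_k$, $\|H_k\|\le\kappa_H$, $u^TH_ku\ge\zeta\|u\|^2$ for $u\in\mathrm{Null}(J_k)$, $\kappa_H,\zeta>0$. Algorithm SS-SQP: inputs $x_0$, $\bar\tau_{-1}>0$, $\alpha_{\max}\in(0,1]$, $\alpha_0\in(0,\alpha_{\max}]$, $\epsilon_f\ge0$, $\gamma,\theta,\sigma,\epsilon_\tau\in(0,1)$. At iteration $k$: random gradient estimate $\bar g_k$; solve $\begin{bmatrix}H_k & J_k^T\\ J_k&0\end{bmatrix}\begin{bmatrix}\bar d_k\\ \bar y_k\end{bmatrix}=-\begin{bmatrix}\bar g_k\\ c_k\end{bmatrix}$; $\bar\tau_k^{\rm trial}=\infty$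 if $\bar g_k^T\bar d_k+\max\{\bar d_k^TH_k\bar d_k,0\}\le0$, else $(1-\sigma)\|c_k\|_1/(\bar g_k^T\bar d_k+\max\{\bar d_k^TH_k\bar d_k,0\})$; $\bar\tau_k=\bar\tau_{k-1}$ if $\bar\tau_{k-1}\le\bar\tau_k^{\rm trial}$, else $\min\{(1-\epsilon_\tau)\bar\tau_{k-1},\bar\tau_k^{\rm trial}\}$; $x_k^+=x_k+\alpha_k\bar d_k$; with objective estimates $\bar f$ and $\bar\phi(x,\tau;\xi)=\tau\bar f(x;\xi)+\|c(x)\|_1$, set $x_{k+1}=x_k^+$, $\alpha_{k+1}=\min\{\alpha_{\max},\alpha_k/\gamma\}$ if $\bar\phi(x_k^+,\bar\tau_k;\xi_k^+)\le\bar\phi(x_k,\bar\tau_k;\xi_k^0)-\alpha_k\theta\Delta l(x_k,\bar\tau_k,\bar g_k,\bar d_k)+2\bar\tau_k\epsilon_f$, else $x_{k+1}=x_k$, $\alpha_{k+1}=\gamma\alpha_k$. The deterministic pair $(d_k,y_k)$ solves the same linear system with $\bar g_k$ replaced by $\nabla f_k$. *)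

theory Defs
  imports "HOL-Analysis.Analysis"
begin

text \<open>Vectors in R^n are real^'n, vectors in R^m are real^'m,
  Jacobians J(x) = nabla c(x)^T are m x n matrices real^'n^'m,
  Hessian approximations H_k are n x n matrices real^'n^'n.\<close>

definition l1norm :: "real^'m \<Rightarrow> real" where
  "l1norm v = (\<Sum>i\<in>UNIV. \<bar>v $ i\<bar>)"

definition delta_l :: "(real^'n \<Rightarrow> real^'m) \<Rightarrow> real^'n \<Rightarrow> real \<Rightarrow> real^'n \<Rightarrow> real^'n \<Rightarrow> real" where
  "delta_l c x tau g d = - tau * (g \<bullet> d) + l1norm (c x)"

definition tau_trial :: "real^'n^'n \<Rightarrow> real^'n \<Rightarrow> real^'n \<Rightarrow> real^'m \<Rightarrow> real \<Rightarrow> ereal" where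
  "tau_trial H g d ck sg =
     (let den = g \<bullet> d + max (d \<bullet> (H *v d)) 0
      in if den \<le> 0 then \<infinity> else ereal ((1 - sg) * l1norm ck / den))"

definition tau_update :: "real \<Rightarrow> ereal \<Rightarrow> real \<Rightarrow> real" where
  "tau_update prev trial eps_tau =
     (if ereal prev \<le> trial then prev else min ((1 - eps_tau) * prev) (real_of_ereal trial))"

text \<open>Merit estimate phibar(x,tau;xi) = tau * fbar(x;xi) + ||c(x)||_1,
  with fbar(x;xi) passed as its realized value.\<close>
definition phibar :: "(real^'n \<Rightarrow> real^'m) \<Rightarrow> real^'n \<Rightarrow> real \<Rightarrow> real \<Rightarrow> real" where
  "phibar c x tau fval = tau * fval + l1norm (c x)"

end

theory Submission
  imports Defs
begin

lemma tau_nonneg_step: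
  assumes "prev \<ge> 0" "eps < 1" "sg < 1"
  shows "tau_update prev (tau_trial H g d ck sg) eps \<ge> 0"
proof -
  have l1: "l1norm ck \<ge> 0" unfolding l1norm_def by (simp add: sum_nonneg)
  have tr: "real_of_ereal (tau_trial H g d ck sg) \<ge> 0"
    unfolding tau_trial_def Let_def using l1 assms by (auto intro!: divide_nonneg_pos)
  show ?thesis unfolding tau_update_def using assms tr by auto
qed

lemma Hbound:
  assumes "onorm (\<lambda>v. H *v v) \<le> kH"
  shows "norm ((H::real^'n^'n) *v u) \<le> kH * norm u"
proof -
  have "norm (H *v u) \<le> onorm (\<lambda>v. H *v v) * norm u"
    using onorm[OF matrix_vector_mul_bounded_linear[of H]] by simp
  also have "\<dots> \<le> kH * norm u" using assms by (simp add: mult_right_mono)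
  finally show ?thesis .
qed

lemma transp_dot: "(transpose (A::real^'n^'m) *v w) \<bullet> u = w \<bullet> (A *v u)"
  by (simp add: transpose_matrix_vector dot_lmul_matrix)

theorem lemma3p15:
  fixes f :: "real^'n \<Rightarrow> real" and gradf :: "real^'n \<Rightarrow> real^'n"
    and c :: "real^'n \<Rightarrow> real^'m" and J :: "real^'n \<Rightarrow> real^'n^'m"
    and X :: "(real^'n) set"
    and L :: real
    and H :: "nat \<Rightarrow> real^'n^'n" and kappa_H zeta :: real
    and x :: "nat \<Rightarrow> real^'n" and alpha :: "nat \<Rightarrow> real"
    and gbar dbar d :: "nat \<Rightarrow> real^'n" and ybar y :: "nat \<Rightarrow> real^'m"
    and taubar :: "nat \<Rightarrow> real"
    and fbar0 fbarplus :: "nat \<Rightarrow> real"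
    and tau_m1 alpha_max eps_f gamma theta sgm eps_tau :: real
    and kappa_FO eps_g kappa_y kappa_l :: real
  assumes mn: "CARD('m) \<le> CARD('n)"
    \<comment> \<open>(A1)\<close>
    and X_open: "open X" and X_convex: "convex X"
    and x_in: "\<And>k. x k \<in> X" and xplus_in: "\<And>k. x k + alpha k *\<^sub>R dbar k \<in> X"
    and f_grad: "\<And>z. z \<in> X \<Longrightarrow> (f has_derivative (\<lambda>h. gradf z \<bullet> h)) (at z)"
    and c_jac: "\<And>z. z \<in> X \<Longrightarrow> (c has_derivative (\<lambda>h. J z *v h)) (at z)"
    and f_bdd_below: "\<exists>B. \<forall>z\<in>X. B \<le> f z"
    and L_pos: "L > 0"
    and gradf_lip: "\<And>z w. z \<in> X \<Longrightarrow> w \<in> X \<Longrightarrow> norm (gradf z - gradf w) \<le> L * norm (z - w)"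
    and gradf_bdd: "\<exists>B. \<forall>z\<in>X. norm (gradf z) \<le> B"
    and c_bdd: "\<exists>B. \<forall>z\<in>X. norm (c z) \<le> B"
    and gradc_lip: "\<exists>Lc. \<forall>i. \<forall>z\<in>X. \<forall>w\<in>X. norm (J z $ i - J w $ i) \<le> Lc * norm (z - w)"
    and gradc_bdd: "\<exists>B. \<forall>i. \<forall>z\<in>X. norm (J z $ i) \<le> B"
    and sing_vals: "\<exists>s>0. \<forall>z\<in>X. \<forall>v. s * norm v \<le> norm (transpose (J z) *v v)"
    \<comment> \<open>(A2)\<close>
    and kH_pos: "kappa_H > 0" and zeta_pos: "zeta > 0"
    and H_sym: "\<And>k. transpose (H k) = H k"
    and H_bdd: "\<And>k. onorm (\<lambda>v. H k *v v) \<le> kappa_H"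
    and H_curv: "\<And>k u. J (x k) *v u = 0 \<Longrightarrow> u \<bullet> (H k *v u) \<ge> zeta * (norm u)\<^sup>2"
    \<comment> \<open>algorithm parameters\<close>
    and tau_m1_pos: "tau_m1 > 0"
    and alpha_max: "0 < alpha_max" "alpha_max \<le> 1"
    and alpha0: "0 < alpha 0" "alpha 0 \<le> alpha_max"
    and eps_f: "eps_f \<ge> 0"
    and params: "0 < gamma" "gamma < 1" "0 < theta" "theta < 1" "0 < sgm" "sgm < 1"
                "0 < eps_tau" "eps_tau < 1"
    and kFO: "kappa_FO \<ge> 0" and epsg: "eps_g \<ge> 0"
    \<comment> \<open>stochastic search direction\<close>
    and sys_bar: "\<And>k. H k *v dbar k + transpose (J (x k)) *v ybar k = - gbar k"
                 "\<And>k. J (x k) *v dbar k = - c (x k)"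
    \<comment> \<open>merit parameter update\<close>
    and tau_upd: "\<And>k. taubar k = tau_update (if k = 0 then tau_m1 else taubar (k - 1))
                       (tau_trial (H k) (gbar k) (dbar k) (c (x k)) sgm) eps_tau"
    \<comment> \<open>step acceptance and step size update\<close>
    and step: "\<And>k. if phibar c (x k + alpha k *\<^sub>R dbar k) (taubar k) (fbarplus k)
                      \<le> phibar c (x k) (taubar k) (fbar0 k)
                         - alpha k * theta * delta_l c (x k) (taubar k) (gbar k) (dbar k)
                         + 2 * taubar k * eps_f
                   then x (Suc k) = x k + alpha k *\<^sub>R dbar k \<and> alpha (Suc k) = min alpha_max (alpha k / gamma)
                   else x (Suc k) = x k \<and> alpha (Suc k) = gamma * alpha k"
    \<comment> \<open>deterministic search direction\<close>
    and sys_det: "\<And>k. H k *v d k + transpose (J (x k)) *v y k = - gradf (x k)"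
                 "\<And>k. J (x k) *v d k = - c (x k)"
    \<comment> \<open>constants of the lemma\<close>
    and ky_pos: "kappa_y > 0" and y_bdd: "\<And>k. norm (y k) \<le> kappa_y"
    and kl_pos: "kappa_l > 0"
    and dl_lower: "\<And>k. delta_l c (x k) (taubar k) (gbar k) (dbar k)
                        \<ge> kappa_l * taubar k * ((norm (dbar k))\<^sup>2 + norm (c (x k)))"
  shows "\<forall>k.
      (norm (gbar k - gradf (x k)) \<le> kappa_FO * alpha k * sqrt (delta_l c (x k) (taubar k) (gbar k) (dbar k))
        \<longrightarrow> taubar k * \<bar>gbar k \<bullet> dbar k\<bar>
            \<le> (max kappa_H kappa_y / kappa_l
                + sqrt (taubar k) * (1 + kappa_H / zeta) * kappa_FO * alpha k / sqrt kappa_l)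
              * delta_l c (x k) (taubar k) (gbar k) (dbar k))
    \<and> (norm (gbar k - gradf (x k)) \<le> eps_g
        \<longrightarrow> taubar k * \<bar>gbar k \<bullet> dbar k\<bar>
            \<le> (max kappa_H kappa_y + 1) / kappa_l * delta_l c (x k) (taubar k) (gbar k) (dbar k)
              + taubar k * (1 + kappa_H / zeta)\<^sup>2 / 4 * eps_g\<^sup>2)"
  proof -
  have tau_nn: "\<And>k. taubar k \<ge> 0"
  proof -
    fix k show "taubar k \<ge> 0"
    proof (induction k)
      case 0 show ?case using tau_upd[of 0] tau_nonneg_step[of tau_m1 eps_tau sgm] tau_m1_pos params by simp
    next
      case (Suc k) show ?case using tau_upd[of "Suc k"] tau_nonneg_step[of "taubar k" eps_tau sgm] Suc params by simp
    qed
  qed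
  have alpha_pos: "\<And>k. alpha k > 0"
  proof -
    fix k show "alpha k > 0"
    proof (induction k)
      case 0 show ?case using alpha0 by simp
    next
      case (Suc k) show ?case using step[of k] Suc params alpha_max
        by (auto split: if_splits)
    qed
  qed
  show ?thesis
  proof (intro allI)
    fix k
    define e where "e = gbar k - gradf (x k)"
    define u where "u = dbar k - d k"
    define Dl where "Dl = delta_l c (x k) (taubar k) (gbar k) (dbar k)"
    define K where "K = 1 + kappa_H / zeta"
    define t where "t = taubar k"
    have t0: "t \<ge> 0" using tau_nn t_def by simp
    have Ju: "J (x k) *v u = 0" using sys_bar(2)[of k] sys_det(2)[of k] unfolding u_def
      by (simp add: matrix_vector_mult_diff_distrib)
    have Hu: "H k *v u + transpose (J (x k)) *v (ybar k - y k) = - e"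
      using sys_bar(1)[of k] sys_det(1)[of k] unfolding u_def e_def
      by (simp add: matrix_vector_mult_diff_distrib algebra_simps)
    have "u \<bullet> (H k *v u) = - (e \<bullet> u)"
    proof -
      have "(H k *v u + transpose (J (x k)) *v (ybar k - y k)) \<bullet> u = - e \<bullet> u" using Hu by simp
      moreover have "(transpose (J (x k)) *v (ybar k - y k)) \<bullet> u = 0" using Ju by (simp only: transp_dot) simp
      ultimately show ?thesis by (simp add: inner_add_left inner_add_right inner_commute)
    qed
    hence "zeta * (norm u)\<^sup>2 \<le> norm e * norm u"
      using H_curv[OF Ju] Cauchy_Schwarz_ineq2[of e u] by linarith
    hence un: "zeta * norm u \<le> norm e"
      by (cases "norm u = 0") (auto simp: power2_eq_square)
    have un2: "kappa_H * norm u \<le> kappa_H / zeta * norm e"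
    proof -
      have "norm u \<le> norm e / zeta" using un zeta_pos by (simp add: field_simps)
      hence "kappa_H * norm u \<le> kappa_H * (norm e / zeta)" using kH_pos by (intro mult_left_mono) auto
      thus ?thesis by simp
    qed
    have gd: "gbar k \<bullet> dbar k = - ((H k *v dbar k) \<bullet> dbar k) + y k \<bullet> c (x k)
          + (H k *v u) \<bullet> dbar k + e \<bullet> dbar k"
    proof -
      have "gradf (x k) = - (H k *v d k + transpose (J (x k)) *v y k)" using sys_det(1)[of k]
        by simp
      hence "gradf (x k) \<bullet> dbar k = - ((H k *v d k) \<bullet> dbar k) - y k \<bullet> (J (x k) *v dbar k)"
        by (simp add: inner_diff_left dot_lmul_matrix)
      also have "\<dots> = - ((H k *v d k) \<bullet> dbar k) + y k \<bullet> c (x k)" using sys_bar(2)[of k] by simp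
      also have "H k *v d k = H k *v dbar k - H k *v u" unfolding u_def
        by (simp add: matrix_vector_mult_diff_distrib)
      finally have "gradf (x k) \<bullet> dbar k = - ((H k *v dbar k) \<bullet> dbar k) + y k \<bullet> c (x k) + (H k *v u) \<bullet> dbar k"
        by (simp add: inner_diff_left)
      moreover have "gbar k = gradf (x k) + e" unfolding e_def by simp
      ultimately show ?thesis by (simp add: inner_add_left)
    qed
    have b1: "\<bar>(H k *v dbar k) \<bullet> dbar k\<bar> \<le> kappa_H * (norm (dbar k))\<^sup>2"
    proof -
      have "\<bar>(H k *v dbar k) \<bullet> dbar k\<bar> \<le> norm (H k *v dbar k) * norm (dbar k)" by (rule Cauchy_Schwarz_ineq2)
      also have "\<dots> \<le> kappa_H * norm (dbar k) * norm (dbar k)"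
        using Hbound[OF H_bdd[of k], of "dbar k"] by (simp add: mult_right_mono)
      finally show ?thesis by (simp add: power2_eq_square mult.assoc)
    qed
    have b2: "\<bar>y k \<bullet> c (x k)\<bar> \<le> kappa_y * norm (c (x k))"
    proof -
      have "\<bar>y k \<bullet> c (x k)\<bar> \<le> norm (y k) * norm (c (x k))" by (rule Cauchy_Schwarz_ineq2)
      also have "\<dots> \<le> kappa_y * norm (c (x k))" using y_bdd[of k] by (simp add: mult_right_mono)
      finally show ?thesis .
    qed
    have b3: "\<bar>(H k *v u) \<bullet> dbar k\<bar> \<le> kappa_H / zeta * norm e * norm (dbar k)"
    proof -
      have "\<bar>(H k *v u) \<bullet> dbar k\<bar> \<le> norm (H k *v u) * norm (dbar k)" by (rule Cauchy_Schwarz_ineq2)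
      also have "\<dots> \<le> kappa_H * norm u * norm (dbar k)"
        using Hbound[OF H_bdd[of k], of u] by (simp add: mult_right_mono)
      also have "\<dots> \<le> kappa_H / zeta * norm e * norm (dbar k)"
        using un2 by (intro mult_right_mono) auto
      finally show ?thesis .
    qed
    have b4: "\<bar>e \<bullet> dbar k\<bar> \<le> norm e * norm (dbar k)" by (rule Cauchy_Schwarz_ineq2)
    define M where "M = max kappa_H kappa_y"
    have main0: "\<bar>gbar k \<bullet> dbar k\<bar> \<le> M * ((norm (dbar k))\<^sup>2 + norm (c (x k))) + K * norm e * norm (dbar k)"
    proof -
      have "\<bar>gbar k \<bullet> dbar k\<bar> \<le> kappa_H * (norm (dbar k))\<^sup>2 + kappa_y * norm (c (x k))
            + kappa_H / zeta * norm e * norm (dbar k) + norm e * norm (dbar k)"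
        using gd b1 b2 b3 b4 by linarith
      moreover have "kappa_H * (norm (dbar k))\<^sup>2 \<le> M * (norm (dbar k))\<^sup>2" unfolding M_def
        by (simp add: mult_right_mono)
      moreover have "kappa_y * norm (c (x k)) \<le> M * norm (c (x k))" unfolding M_def
        by (simp add: mult_right_mono)
      ultimately show ?thesis unfolding K_def by (simp add: algebra_simps)
    qed
    have dl: "kappa_l * t * ((norm (dbar k))\<^sup>2 + norm (c (x k))) \<le> Dl"
      using dl_lower[of k] unfolding Dl_def t_def by simp
    have "0 \<le> kappa_l * t * ((norm (dbar k))\<^sup>2 + norm (c (x k)))"
      using t0 kl_pos by (intro mult_nonneg_nonneg) auto
    hence Dl0: "Dl \<ge> 0" using dl by linarith
    have tS: "t * ((norm (dbar k))\<^sup>2 + norm (c (x k))) \<le> Dl / kappa_l"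
      using dl kl_pos by (simp add: field_simps)
    have tD: "t * (norm (dbar k))\<^sup>2 \<le> Dl / kappa_l"
    proof -
      have "t * (norm (dbar k))\<^sup>2 \<le> t * ((norm (dbar k))\<^sup>2 + norm (c (x k)))"
        using t0 by (intro mult_left_mono) auto
      thus ?thesis using tS by linarith
    qed
    have M0: "M > 0" unfolding M_def using kH_pos by simp
    have K0: "K \<ge> 0" unfolding K_def using kH_pos zeta_pos by simp
    have main: "t * \<bar>gbar k \<bullet> dbar k\<bar> \<le> M / kappa_l * Dl + K * norm e * (t * norm (dbar k))"
    proof -
      have "t * \<bar>gbar k \<bullet> dbar k\<bar> \<le> t * (M * ((norm (dbar k))\<^sup>2 + norm (c (x k))) + K * norm e * norm (dbar k))"
        using main0 t0 by (rule mult_left_mono)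
      also have "\<dots> = M * (t * ((norm (dbar k))\<^sup>2 + norm (c (x k)))) + K * norm e * (t * norm (dbar k))"
        by (simp add: algebra_simps)
      also have "\<dots> \<le> M * (Dl / kappa_l) + K * norm e * (t * norm (dbar k))"
        using mult_left_mono[OF tS, of M] M0 by simp
      finally show ?thesis by simp
    qed
    have td: "t * norm (dbar k) \<le> sqrt t * sqrt (Dl / kappa_l)"
    proof -
      have "t * norm (dbar k) = sqrt t * sqrt (t * (norm (dbar k))\<^sup>2)"
        using t0 by (simp add: real_sqrt_mult)
      also have "\<dots> \<le> sqrt t * sqrt (Dl / kappa_l)"
        using tD t0 by (intro mult_left_mono) auto
      finally show ?thesis .
    qed
    have part1: "norm e \<le> kappa_FO * alpha k * sqrt Dl \<Longrightarrow>
        t * \<bar>gbar k \<bullet> dbar k\<bar> \<le> (M / kappa_l + sqrt t * K * kappa_FO * alpha k / sqrt kappa_l) * Dl"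
    proof -
      assume h: "norm e \<le> kappa_FO * alpha k * sqrt Dl"
      have "K * norm e * (t * norm (dbar k)) \<le> K * (kappa_FO * alpha k * sqrt Dl) * (sqrt t * sqrt (Dl / kappa_l))"
      proof -
        have a0: "alpha k \<ge> 0" using alpha_pos by (simp add: less_imp_le)
        have P: "K * (kappa_FO * alpha k * sqrt Dl) \<ge> 0" using K0 kFO a0 Dl0 by simp
        have "K * norm e \<le> K * (kappa_FO * alpha k * sqrt Dl)" using h K0 by (rule mult_left_mono)
        hence "K * norm e * (t * norm (dbar k)) \<le> K * (kappa_FO * alpha k * sqrt Dl) * (t * norm (dbar k))"
          using t0 by (intro mult_right_mono) auto
        also have "\<dots> \<le> K * (kappa_FO * alpha k * sqrt Dl) * (sqrt t * sqrt (Dl / kappa_l))"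
          using td P by (rule mult_left_mono)
        finally show ?thesis .
      qed
      also have "\<dots> = sqrt t * K * kappa_FO * alpha k / sqrt kappa_l * (sqrt Dl * sqrt Dl)"
        by (simp add: real_sqrt_divide)
      also have "sqrt Dl * sqrt Dl = Dl" using Dl0 by simp
      finally show ?thesis using main by (simp add: algebra_simps)
    qed
    have part2: "norm e \<le> eps_g \<Longrightarrow>
        t * \<bar>gbar k \<bullet> dbar k\<bar> \<le> (M + 1) / kappa_l * Dl + t * K\<^sup>2 / 4 * eps_g\<^sup>2"
    proof -
      assume h: "norm e \<le> eps_g"
      have "K * norm e * norm (dbar k) \<le> (norm (dbar k))\<^sup>2 + K\<^sup>2 / 4 * (norm e)\<^sup>2"
      proof -
        have "0 \<le> (norm (dbar k) - K * norm e / 2)\<^sup>2" by simp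
        also have "\<dots> = (norm (dbar k))\<^sup>2 + K\<^sup>2 / 4 * (norm e)\<^sup>2 - K * norm e * norm (dbar k)"
          by (simp add: power2_eq_square algebra_simps)
        finally show ?thesis by simp
      qed
      also have "\<dots> \<le> (norm (dbar k))\<^sup>2 + K\<^sup>2 / 4 * eps_g\<^sup>2"
        using h mult_left_mono[OF power_mono[OF h, of 2], of "K\<^sup>2"] by simp
      finally have "t * (K * norm e * norm (dbar k)) \<le> t * ((norm (dbar k))\<^sup>2 + K\<^sup>2 / 4 * eps_g\<^sup>2)"
        using t0 by (rule mult_left_mono)
      hence "K * norm e * (t * norm (dbar k)) \<le> t * (norm (dbar k))\<^sup>2 + t * K\<^sup>2 / 4 * eps_g\<^sup>2"
        by (simp add: algebra_simps)
      hence "K * norm e * (t * norm (dbar k)) \<le> Dl / kappa_l + t * K\<^sup>2 / 4 * eps_g\<^sup>2" using tD by linarith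
      thus ?thesis using main by (simp add: add_divide_distrib algebra_simps)
    qed
    show "(norm (gbar k - gradf (x k)) \<le> kappa_FO * alpha k * sqrt (delta_l c (x k) (taubar k) (gbar k) (dbar k))
        \<longrightarrow> taubar k * \<bar>gbar k \<bullet> dbar k\<bar>
            \<le> (max kappa_H kappa_y / kappa_l
                + sqrt (taubar k) * (1 + kappa_H / zeta) * kappa_FO * alpha k / sqrt kappa_l)
              * delta_l c (x k) (taubar k) (gbar k) (dbar k))
    \<and> (norm (gbar k - gradf (x k)) \<le> eps_g
        \<longrightarrow> taubar k * \<bar>gbar k \<bullet> dbar k\<bar>
            \<le> (max kappa_H kappa_y + 1) / kappa_l * delta_l c (x k) (taubar k) (gbar k) (dbar k)
              + taubar k * (1 + kappa_H / zeta)\<^sup>2 / 4 * eps_g\<^sup>2)"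
      using part1 part2 unfolding e_def Dl_def t_def K_def M_def by blast
  qed
qed

end
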